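(* If $q=p^n$ is odd, then $U_{(q-1)/2}(x)+U_{(q-3)/2}(x)\equiv\left(\frac2q\right)(x-1)^{(q-1)/2}\pmod p$ as polynomials.
   Context: Chebyshev polynomials of the second kind $U_k\in\mathbb Z[x]$: $U_0=1$, $U_1=2x$, $U_{k+2}=2xU_{k+1}-U_k$. $\left(\frac2q\right)$ is $1$ if $2$ is a square in ${\mathbb F}_q$ and $-1$ otherwise. *)

theory Defs
  imports "HOL-Computational_Algebra.Polynomial" "HOL-Number_Theory.Cong" "HOL-Library.Cardinality"
begin

fun cheb_U :: "nat \<Rightarrow> int poly" where
  "cheb_U 0 = 1"
| "cheb_U (Suc 0) = [:0, 2:]"
| "cheb_U (Suc (Suc k)) = [:0, 2:] * cheb_U (Suc k) - cheb_U k"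

text \<open>(2/q) computed inside a given finite field F (of order q):
  1 if 2 is a square in F, -1 otherwise.\<close>
definition two_symbol :: "'a::field itself \<Rightarrow> int" where
  "two_symbol _ = (if \<exists>y::'a. y ^ 2 = 2 then 1 else -1)"

end

theory Submission imports Defs "HOL-Computational_Algebra.Primes"
begin

definition AA :: "'a::field poly" where "AA = [:0,1:]^4 + 1"
definition BB :: "'a::field poly" where "BB = smult 2 ([:0,1:]^2)"
definition HH :: "nat \<Rightarrow> 'a::field poly \<Rightarrow> 'a poly" where
  "HH k f = (\<Sum>i\<le>k. smult (coeff f i) (AA^i * BB^(k-i)))"

lemma smult_sum_right: "smult c (sum f A) = sum (\<lambda>i. smult c (f i)) A"
  by (induct A rule: infinite_finite_induct) (simp_all add: smult_add_right)

lemma HH_add: "HH k (f + g) = HH k f + HH k g"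
  by (simp add: HH_def sum.distrib smult_add_left)
lemma HH_diff: "HH k (f - g) = HH k f - HH k g"
  by (simp add: HH_def sum_subtractf smult_diff_left)
lemma HH_smult: "HH k (smult c f) = smult c (HH k f)"
  by (simp add: HH_def smult_sum_right)

lemma HH_shift: assumes "degree f \<le> k" shows "HH (Suc k) (pCons 0 f) = AA * HH k f"
proof -
  have "HH (Suc k) (pCons 0 f) = (\<Sum>i\<le>k. smult (coeff f i) (AA^(Suc i) * BB^(k-i)))"
    unfolding HH_def by (subst sum.atMost_Suc_shift) simp
  also have "\<dots> = AA * HH k f" unfolding HH_def
    by (simp add: sum_distrib_left mult_ac)
  finally show ?thesis .
qed

lemma HH_lift: assumes "degree f \<le> k" shows "HH (Suc k) f = BB * HH k f"
proof -
  have "HH (Suc k) f = (\<Sum>i\<le>k. smult (coeff f i) (AA^i * BB^(Suc k-i)))"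
    unfolding HH_def using assms by (simp add: coeff_eq_0)
  also have "\<dots> = (\<Sum>i\<le>k. BB * smult (coeff f i) (AA^i * BB^(k-i)))"
    by (intro sum.cong refl) (simp add: Suc_diff_le mult_ac)
  also have "\<dots> = BB * HH k f" unfolding HH_def
    by (simp add: sum_distrib_left)
  finally show ?thesis .
qed

lemma degree_AA: "degree (AA :: 'a::field poly) = 4"
  unfolding AA_def by (simp add: degree_add_eq_left degree_power_eq)
lemma lc_AA: "lead_coeff (AA :: 'a::field poly) = 1"
  proof -
  have d: "degree ([:0,1:]^4 :: 'a poly) = 4" by (simp add: degree_power_eq)
  have "lead_coeff ([:0,1:]^4 + 1 :: 'a poly) = lead_coeff ([:0,1:]^4 :: 'a poly)"
    using lead_coeff_add_le[of "1::'a poly" "[:0,1:]^4"] d by (simp add: add.commute)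
  also have "\<dots> = 1" by (simp add: lead_coeff_power)
  finally show ?thesis by (simp add: AA_def)
qed

lemma BB_eq: "(BB :: 'a::field poly) = [:0,0,2:]"
  unfolding BB_def by (simp add: power2_eq_square)
lemma degree_BB: "(2::'a::field) \<noteq> 0 \<Longrightarrow> degree (BB :: 'a poly) = 2"
  unfolding BB_eq by simp
lemma lc_BB: "(2::'a::field) \<noteq> 0 \<Longrightarrow> lead_coeff (BB :: 'a poly) = 2"
  unfolding BB_eq by simp
lemma AA_nz: "(AA :: 'a::field poly) \<noteq> 0" by (metis degree_0 degree_AA zero_neq_numeral)

lemma HH_inj:
  fixes f :: "'a::field poly"
  assumes two: "(2::'a) \<noteq> 0" and deg: "degree f \<le> k" and H: "HH k f = 0"
  shows "f = 0"
proof (rule ccontr)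
  assume nz: "f \<noteq> 0"
  define e where "e = degree f"
  define n where "n = 2*k + 2*e"
  have ek: "e \<le> k" using deg e_def by simp
  have dterm: "degree (AA^i * BB^(k-i) :: 'a poly) = 4*i + 2*(k-i)" for i
  proof -
    have B: "BB \<noteq> (0::'a poly)" using degree_BB[OF two] by (metis degree_0 zero_neq_numeral)
    have "degree (AA^i * BB^(k-i) :: 'a poly) = degree (AA^i :: 'a poly) + degree (BB^(k-i) :: 'a poly)"
      by (rule degree_mult_eq) (simp_all add: AA_nz B)
    also have "\<dots> = 4*i + 2*(k-i)" proof -
      have a1: "degree (AA :: 'a poly) = 4" by (rule degree_AA)
      have a2: "AA \<noteq> (0 :: 'a poly)" by (rule AA_nz)
      show ?thesis using degree_power_eq[OF a2, of i] degree_power_eq[OF B, of "k-i"] a1 degree_BB[OF two] by simp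
    qed
    finally show ?thesis .
  qed
  have "coeff (HH k f) n = (\<Sum>i\<le>k. coeff f i * coeff (AA^i * BB^(k-i)) n)"
    by (simp add: HH_def coeff_sum)
  also have "\<dots> = coeff f e * coeff (AA^e * BB^(k-e)) n
       + (\<Sum>i\<in>{..k}-{e}. coeff f i * coeff (AA^i * BB^(k-i)) n)"
    using ek by (subst sum.remove[of _ e]) auto
  also have "(\<Sum>i\<in>{..k}-{e}. coeff f i * coeff (AA^i * BB^(k-i)) n) = 0"
  proof (intro sum.neutral ballI)
    fix i assume i: "i \<in> {..k}-{e}"
    show "coeff f i * coeff (AA^i * BB^(k-i)) n = 0"
    proof (cases "i < e")
      case True
      have "degree (AA^i * BB^(k-i) :: 'a poly) < n" using True i ek
        unfolding dterm n_def by auto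
      then show ?thesis by (simp add: coeff_eq_0)
    next
      case False
      then have "e < i" using i by auto
      then show ?thesis by (simp add: coeff_eq_0 e_def)
    qed
  qed
  also have "coeff (AA^e * BB^(k-e) :: 'a poly) n = 2^(k-e)"
  proof -
    have "n = degree (AA^e * BB^(k-e) :: 'a poly)" using dterm[of e] ek n_def by simp
    then have "coeff (AA^e * BB^(k-e) :: 'a poly) n = lead_coeff (AA^e * BB^(k-e))" by simp
    also have "\<dots> = 2^(k-e)" using two by (simp add: lead_coeff_mult lead_coeff_power lc_AA lc_BB)
    finally show ?thesis .
  qed
  finally have "coeff (HH k f) n = lead_coeff f * 2^(k-e)" by (simp add: e_def)
  moreover have "lead_coeff f * 2^(k-e) \<noteq> 0" using nz two by simp
  ultimately show False using H by simp
qed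

fun Ua :: "nat \<Rightarrow> 'a::field poly" where
  "Ua 0 = 1"
| "Ua (Suc 0) = [:0, 2:]"
| "Ua (Suc (Suc k)) = [:0, 2:] * Ua (Suc k) - Ua k"

lemma coeff_Ua: "coeff (Ua k :: 'a::field poly) i = of_int (coeff (cheb_U k) i)"
  by (induct k arbitrary: i rule: cheb_U.induct) (auto simp: coeff_pCons coeff_1 split: nat.split)

lemma degree_Ua: "degree (Ua k :: 'a::field poly) \<le> k"
proof (induct k rule: cheb_U.induct)
  case (3 k)
  have "degree ([:0, 2:] * Ua (Suc k) :: 'a poly) \<le> Suc (Suc k)"
    using degree_mult_le[of "[:0,2::'a:]" "Ua (Suc k)"] 3 by auto
  moreover have "degree (Ua k :: 'a poly) \<le> Suc (Suc k)" using 3 by auto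
  ultimately show ?case using degree_diff_le by (metis Ua.simps(3))
qed auto

fun Wa :: "nat \<Rightarrow> 'a::field poly" where
  "Wa 0 = 1"
| "Wa (Suc k) = Ua (Suc k) + Ua k"

lemma degree_Wa: "degree (Wa k :: 'a::field poly) \<le> k"
proof (cases k)
  case (Suc j)
  then show ?thesis using degree_Ua[of "Suc j", where ?'a='a] degree_Ua[of j, where ?'a='a]
    by (auto intro: degree_add_le)
qed simp

lemma mult_X2: "[:0,2:] * (f::'a::field poly) = smult 2 (pCons 0 f)"
  by simp

lemma Wa_rec: "(Wa (Suc (Suc k)) :: 'a::field poly) = smult 2 (pCons 0 (Wa (Suc k))) - Wa k"
proof -
  have "(Wa (Suc (Suc k)) :: 'a::field poly) = [:0,2:] * Wa (Suc k) - Wa k"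
    by (cases k) (simp_all only: Wa.simps Ua.simps algebra_simps, simp_all)
  then show ?thesis by (simp only: mult_X2)
qed

lemma smult_two: "smult (2::'a::field) p = 2 * p"
  by (simp add: numeral_poly)
lemma smult_two_pow: "smult ((2::'a::field)^k) p = 2^k * p"
proof (induct k)
  case (Suc k)
  have "smult ((2::'a)^Suc k) p = smult 2 (smult (2^k) p)" by simp
  then show ?case using Suc by (simp add: smult_two)
qed simp

definition X2 :: "'a::field poly" where "X2 = [:0,1:]^2"
lemma AA_X2: "AA = X2 * X2 + 1" unfolding AA_def X2_def by (simp flip: power_add)
lemma BB_X2: "BB = 2 * X2" unfolding BB_def X2_def by (simp add: smult_two)

lemma HH0: "HH 0 (1::'a::field poly) = 1" by (simp add: HH_def)

lemma alg: "(2::'b::comm_ring_1) * ((Z*Z+1) * (2*T * (Y*(Z*Z) - 1))) - (2*Z)*((2*Z)*(T*(Y-1))) = 4*T*(Y*(Z*Z*Z*Z) - 1)"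
  by (simp add: algebra_simps)
lemma alg2: "(Z - 1) * ((2*Z) + 2 * (Z*Z+1)) = (2::'b::comm_ring_1) * (Z*Z*Z - 1)"
  by (simp add: algebra_simps)
lemma alg3: "2 * (Z*Z+1) - 2 * (2*Z) = (2::'b::comm_ring_1) * ((Z - 1)*(Z-1))"
  by (simp add: algebra_simps)

lemma main_id:
  "(X2 - 1) * HH k (Wa k) = 2^k * (X2^(2*k+1) - (1::'a::field poly))"
proof (induct k rule: less_induct)
  case (less k)
  show ?case
  proof (cases k)
    case 0
    then show ?thesis by (simp add: HH_def)
  next
    case (Suc j)
    show ?thesis
    proof (cases j)
      case 0
      have w: "(Wa 1 :: 'a poly) = 1 + smult 2 (pCons 0 1)" by simp
      have d: "degree (1::'a poly) \<le> 0" by simp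
      have "HH 1 (Wa 1 :: 'a poly) = BB + 2 * AA"
        unfolding w HH_add HH_smult using HH_shift[OF d] HH_lift[OF d]
        by (simp add: smult_two HH0)
      then show ?thesis using Suc 0 unfolding AA_X2 BB_X2
        using alg2[of X2] by (simp add: power3_eq_cube)
    next
      case (Suc i)
      have k: "k = Suc (Suc i)" using Suc \<open>k = Suc j\<close> by simp
      have IH1: "(X2 - 1) * HH (Suc i) (Wa (Suc i)) = 2^Suc i * (X2^(2*Suc i+1) - (1::'a poly))"
        by (rule less(1)) (simp add: k)
      have IH0: "(X2 - 1) * HH i (Wa i) = 2^i * (X2^(2*i+1) - (1::'a poly))"
        by (rule less(1)) (simp add: k)
      have d1: "degree (Wa (Suc i) :: 'a poly) \<le> Suc i" by (rule degree_Wa)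
      have d0: "degree (Wa i :: 'a poly) \<le> i" by (rule degree_Wa)
      have d0': "degree (Wa i :: 'a poly) \<le> Suc i" using d0 by simp
      have "HH k (Wa k :: 'a poly) = smult 2 (AA * HH (Suc i) (Wa (Suc i))) - BB * (BB * HH i (Wa i))"
        unfolding k Wa_rec HH_diff HH_smult
        using HH_shift[OF d1] HH_lift[OF d0] HH_lift[OF d0'] by simp
      then have "(X2 - 1) * HH k (Wa k :: 'a poly) = (X2 - 1) * (smult 2 (AA * HH (Suc i) (Wa (Suc i))) - BB * (BB * HH i (Wa i)))"
        by (simp only:)
      also have "\<dots> = 2 * (AA * ((X2 - 1) * HH (Suc i) (Wa (Suc i)))) - BB * (BB * ((X2 - 1) * HH i (Wa i)))"
        by (simp only: smult_two algebra_simps)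
      also have "\<dots> = 2 * (AA * (2^Suc i * (X2^(2*Suc i+1) - (1::'a poly)))) - BB * (BB * (2^i * (X2^(2*i+1) - (1::'a poly))))"
        by (simp only: IH0 IH1)
      also have "\<dots> = 2^k * (X2^(2*k+1) - (1::'a poly))"
      proof -
        define Y :: "'a poly" where "Y = X2^(2*i+1)"
        define T :: "'a poly" where "T = 2^i"
        have e1: "X2^(2*Suc i+1) = Y * (X2 * X2)" by (simp add: Y_def power_add[symmetric] algebra_simps)
        have e2: "X2^(2*k+1) = Y * (X2*X2*X2*X2)" by (simp add: k Y_def power_add[symmetric] algebra_simps)
        have e3: "(2::'a poly)^Suc i = 2 * T" "(2::'a poly)^k = 4 * T" by (simp_all add: T_def k)
        show ?thesis unfolding e1 e2 e3 Y_def[symmetric] T_def[symmetric] AA_X2 BB_X2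
          by (rule alg)
      qed
      finally show ?thesis .
    qed
  qed
qed

lemma HH_target: "HH k ([:-2,2:]^k) = (2 * ((X2 - 1)*(X2 - 1)))^k"
proof (induct k)
  case 0 then show ?case by (simp add: HH_def)
next
  case (Suc k)
  have "degree ([:-2,2::'a:]^k) \<le> degree [:-2,2::'a:] * k" by (rule degree_power_le)
  also have "\<dots> \<le> 1 * k" by (intro mult_right_mono) auto
  finally have d: "degree ([:-2,2::'a:]^k) \<le> k" by simp
  have e: "[:-2,2::'a:]^Suc k = smult 2 (pCons 0 ([:-2,2:]^k)) - smult 2 ([:-2,2:]^k)"
    by (simp add: algebra_simps)
  have "HH (Suc k) ([:-2,2::'a:]^Suc k) = (2 * AA - 2 * BB) * HH k ([:-2,2:]^k)"
    unfolding e HH_diff HH_smult HH_shift[OF d] HH_lift[OF d] by (simp add: smult_two algebra_simps)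
  also have "2 * AA - 2 * BB = 2 * ((X2 - 1)*(X2 - 1) :: 'a poly)"
    unfolding AA_X2 BB_X2 by (rule alg3)
  finally show ?case using Suc by simp
qed

lemma of_nat_card_eq_0: "of_nat (card (UNIV :: 'a::{field,finite} set)) = (0::'a)"
proof -
  have "(\<Sum>y\<in>(UNIV::'a set). y + 1) = (\<Sum>y\<in>UNIV. y)"
    by (rule sum.reindex_bij_witness[of _ "\<lambda>y. y - 1" "\<lambda>y. y + 1"]) auto
  then show ?thesis by (simp add: sum.distrib)
qed

lemma power_card_minus_1:
  fixes x :: "'a::{field,finite}"
  assumes "x \<noteq> 0"
  shows "x ^ (card (UNIV :: 'a set) - 1) = 1"
proof -
  have fin: "finite (UNIV - {0::'a})" by simp
  have "(\<Prod>y\<in>UNIV-{0}. x * y) = (\<Prod>y\<in>UNIV-{0::'a}. y)"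
    by (rule prod.reindex_bij_witness[of _ "\<lambda>y. y / x" "\<lambda>y. x * y"]) (use assms in auto)
  moreover have "(\<Prod>y\<in>UNIV-{0}. x * y) = x ^ card (UNIV - {0::'a}) * (\<Prod>y\<in>UNIV-{0::'a}. y)"
    by (simp add: prod.distrib)
  moreover have "(\<Prod>y\<in>UNIV-{0::'a}. y) \<noteq> 0" using fin by simp
  moreover have "card (UNIV - {0::'a}) = card (UNIV :: 'a set) - 1" by (simp add: card_Diff_singleton)
  ultimately show ?thesis by simp
qed

lemma coeff_lin_pow: "coeff ([:-1,1:]^k :: 'a::field poly) i = of_int (coeff ([:-1,1:]^k :: int poly) i)"
  by (induct k arbitrary: i) (auto simp: coeff_pCons coeff_1 split: nat.split)

lemma square_if_euler:
  fixes c :: "'a::{field,finite}"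
  assumes card: "card (UNIV :: 'a set) = 2*m+1" and cm: "c ^ m = 1"
  shows "\<exists>y. y^2 = c"
proof -
  have "card {0::'a, 1} \<le> card (UNIV :: 'a set)" by (rule card_mono) auto
  then have m1: "m \<ge> 1" using card by simp
  define P :: "'a poly" where "P = monom 1 m - 1"
  define R where "R = {x. poly P x = 0}"
  define S where "S = (\<lambda>y. y^2) ` (UNIV - {0::'a})"
  have polyP: "poly P x = x^m - 1" for x by (simp add: P_def poly_monom)
  have "P \<noteq> 0"
  proof
    assume "P = 0"
    then have "poly P 0 = 0" by simp
    then show False using m1 polyP[of 0] by (simp add: power_0_left)
  qed
  then have cR: "card R \<le> degree P" unfolding R_def by (rule card_poly_roots_bound)
  have "degree P \<le> m" unfolding P_def
    using degree_diff_le[of "monom (1::'a) m" m 1] by (simp add: degree_monom_eq)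
  with cR have cR': "card R \<le> m" by simp
  have SR: "S \<subseteq> R"
  proof
    fix s assume "s \<in> S"
    then obtain y where y: "y \<noteq> 0" "s = y^2" unfolding S_def by auto
    have "y ^ (2*m) = 1" using power_card_minus_1[OF y(1)] card by simp
    then show "s \<in> R" unfolding R_def polyP y(2) by (simp add: power_mult)
  qed
  define F where "F s = {y. poly [:-s,0,1:] y = (0::'a)}" for s
  have cF: "card (F s) \<le> 2" for s
  proof -
    have "[:-s,0,1:] \<noteq> 0" by simp
    then have "card (F s) \<le> degree [:-s,0,1:]" unfolding F_def by (rule card_poly_roots_bound)
    then show ?thesis by simp
  qed
  have "UNIV - {0::'a} \<subseteq> (\<Union>s\<in>S. F s)"
  proof
    fix y :: 'a assume "y \<in> UNIV - {0}"
    then have "y^2 \<in> S" unfolding S_def by auto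
    moreover have "y \<in> F (y^2)" unfolding F_def by (simp add: power2_eq_square)
    ultimately show "y \<in> (\<Union>s\<in>S. F s)" by blast
  qed
  then have "card (UNIV - {0::'a}) \<le> card (\<Union>s\<in>S. F s)" by (intro card_mono) auto
  also have "\<dots> \<le> (\<Sum>s\<in>S. card (F s))" by (intro card_UN_le) simp
  also have "\<dots> \<le> card S * 2" using sum_bounded_above[of S "\<lambda>s. card (F s)" 2] cF by simp
  finally have "2*m \<le> card S * 2" using card by (simp add: card_Diff_singleton)
  then have "m \<le> card S" by simp
  with cR' have "card R \<le> card S" by simp
  moreover have "card S \<le> card R" using SR by (intro card_mono) auto
  ultimately have "S = R" using SR by (intro card_subset_eq) auto
  moreover have "c \<in> R" unfolding R_def polyP using cm by simp
  ultimately show ?thesis unfolding S_def by auto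
qed

lemma euler_two:
  assumes card: "card (UNIV :: 'a::{field,finite} set) = 2*m+1" and two: "(2::'a) \<noteq> 0"
  shows "(2::'a)^m = of_int (two_symbol TYPE('a))"
proof (cases "\<exists>y::'a. y^2 = 2")
  case True
  then obtain y :: 'a where y: "y^2 = 2" by auto
  then have y0: "y \<noteq> 0" using two by auto
  have "y ^ (2*m) = 1" using power_card_minus_1[OF y0] card by simp
  then show ?thesis using True y by (simp add: two_symbol_def power_mult)
next
  case False
  have "((2::'a)^m)^2 = 1" using power_card_minus_1[OF two] card by (simp add: power_mult[symmetric] mult.commute)
  then have "(2::'a)^m = 1 \<or> (2::'a)^m = -1" by (simp add: power2_eq_1_iff)
  moreover have "(2::'a)^m \<noteq> 1" using square_if_euler[OF card] False by blast
  ultimately show ?thesis using False by (simp add: two_symbol_def)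
qed

theorem proposition9p4:
  fixes p n q :: nat
  assumes "prime p" and "n \<ge> 1" and "q = p ^ n" and "odd q"
    and "CARD('a) = q"
  shows "\<forall>i. [coeff (cheb_U ((q - 1) div 2) + cheb_U ((q - 3) div 2)) i
               = two_symbol TYPE('a::{field,finite}) * coeff ([:-1, 1:] ^ ((q - 1) div 2)) i] (mod int p)"
proof
  fix i
  note pr = assms(1)
  define m where "m = (q - 1) div 2"
  have p2: "p \<ge> 2" using pr prime_ge_2_nat by blast
  have "p \<noteq> 2" using assms(2,3,4) by (cases n) auto
  then have podd: "odd p" using pr prime_odd_nat p2 by auto
  have "p \<le> q" using assms(2,3) p2 by (simp add: self_le_power)
  then have q3: "q \<ge> 3" using p2 \<open>p \<noteq> 2\<close> by linarith
  have qm: "q = 2*m+1" using assms(4) m_def by simp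
  have m1: "m \<ge> 1" using q3 qm by simp
  have m3: "(q - 3) div 2 = m - 1" using qm by simp
  have fin: "finite (UNIV :: 'a set)" by simp
  have CP: "CHAR('a) > 0" by (rule finite_imp_CHAR_pos[OF fin])
  have Cprime: "prime CHAR('a)" using prime_CHAR_semidom[OF CP] .
  have "CHAR('a) dvd q"
    using of_nat_card_eq_0[where ?'a='a] assms(5) by (simp add: of_nat_eq_0_iff_char_dvd)
  then have "CHAR('a) dvd p" using assms(3) Cprime prime_dvd_power by blast
  then have Cp: "CHAR('a) = p" using Cprime pr primes_dvd_imp_eq by blast
  have two: "(2::'a) \<noteq> 0"
  proof
    assume "(2::'a) = 0"
    then have "of_nat 2 = (0::'a)" by simp
    then have "p dvd 2" using Cp by (simp only: of_nat_eq_0_iff_char_dvd)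
    then have "p \<le> 2" by (rule dvd_imp_le) simp
    then show False using p2 \<open>p \<noteq> 2\<close> by simp
  qed
  have X2nz: "X2 - 1 \<noteq> (0::'a poly)"
  proof
    assume "X2 - 1 = (0::'a poly)"
    then have "poly (X2 - 1) 0 = (0::'a)" by simp
    then show False by (simp add: X2_def)
  qed
  have frob: "(X2 - 1)^q = X2^q - (1::'a poly)"
  proof -
    have "(X2 + (-1))^q = X2^q + (-1::'a poly)^q"
      by (rule freshmans_dream'[of _ n]) (simp_all add: Cp pr assms(3))
    then show ?thesis using assms(4) by simp
  qed
  have "(X2 - 1) * HH m (Wa m :: 'a poly) = 2^m * ((X2 - 1)^q)"
    using main_id[of m] frob qm by simp
  also have "\<dots> = (X2 - 1) * HH m ([:-2,2:]^m)"
  proof -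
    define D :: "'a poly" where "D = X2 - 1"
    have "(2 * (D * D))^m = 2^m * D^(2*m)"
      by (simp add: power_mult_distrib power_mult power2_eq_square)
    then have "D * (2 * (D * D))^m = 2^m * D^(2*m+1)" by (simp add: algebra_simps)
    then show ?thesis unfolding HH_target qm D_def by (metis mult.assoc)
  qed
  finally have "HH m (Wa m :: 'a poly) = HH m ([:-2,2:]^m)" using X2nz by simp
  then have H0: "HH m (Wa m - [:-2,2:]^m :: 'a poly) = 0" by (simp add: HH_diff)
  have dW: "degree (Wa m - [:-2,2:]^m :: 'a poly) \<le> m"
  proof -
    have "degree ([:-2,2::'a:]^m) \<le> degree [:-2,2::'a:] * m" by (rule degree_power_le)
    also have "\<dots> \<le> 1 * m" by (intro mult_right_mono) auto
    finally have "degree ([:-2,2::'a:]^m) \<le> m" by simp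
    then show ?thesis using degree_Wa[of m] degree_diff_le by blast
  qed
  have WE: "(Wa m :: 'a poly) = [:-2,2:]^m" using HH_inj[OF two dW H0] by simp
  have e: "[:-2,2::'a:] = smult 2 [:-1,1:]" by simp
  have WE2: "(Wa m :: 'a poly) = smult (2^m) ([:-1,1:]^m)" unfolding WE e by (rule smult_power)
  have eps: "(2::'a)^m = of_int (two_symbol TYPE('a))"
    by (rule euler_two) (simp_all add: assms(5) qm two)
  have "coeff (Wa m :: 'a poly) i = of_int (coeff (cheb_U m + cheb_U (m - 1)) i)"
  proof -
    obtain j where j: "m = Suc j" using m1 by (cases m) auto
    show ?thesis unfolding j by (simp add: coeff_Ua)
  qed
  moreover have "coeff (Wa m :: 'a poly) i = of_int (two_symbol TYPE('a) * coeff ([:-1,1:]^m :: int poly) i)"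
    unfolding WE2 by (simp add: eps coeff_lin_pow)
  ultimately have "(of_int (coeff (cheb_U m + cheb_U (m - 1)) i) :: 'a)
       = of_int (two_symbol TYPE('a) * coeff ([:-1,1:]^m :: int poly) i)" by simp
  then have "[coeff (cheb_U m + cheb_U (m - 1)) i = two_symbol TYPE('a) * coeff ([:-1,1:]^m :: int poly) i] (mod int CHAR('a))"
    by (simp only: of_int_eq_iff_cong_CHAR)
  then show "[coeff (cheb_U ((q - 1) div 2) + cheb_U ((q - 3) div 2)) i
               = two_symbol TYPE('a) * coeff ([:-1, 1:] ^ ((q - 1) div 2)) i] (mod int p)"
    unfolding m3 m_def[symmetric] Cp .
qed

end
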